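(* Let $\mu$ and $\lambda$ be constants, and let $r_\mu:=1/\sqrt{-\mu}$ if $\mu<0$ and $r_\mu:=+\infty$ if $\mu\ge 0$. Then the Randers metric $$F(x,y)=\frac{\sqrt[4]{1+(\mu+\lambda^2)|x|^2}\,\sqrt{(1+\mu|x|^2)|y|^2-\mu\langle x,y\rangle^2}}{1+\mu|x|^2}+\frac{\lambda\langle x,y\rangle}{(1+\mu|x|^2)\sqrt[4]{1+(\mu+\lambda^2)|x|^2}}$$ is dually flat on the ball $\mathbb{B}^n(r_\mu)=\{x\in\mathbb{R}^n:|x|<r_\mu\}$.
   Context: $|\cdot|$ and $\langle\cdot,\cdot\rangle$ are the Euclidean norm and inner product on $\mathbb{R}^n$; $x$ is the point and $y$ the tangent vector. A Finsler metric $F$ on an open set $U\subseteq\mathbb{R}^n$ is called dually flat if $[F^2]_{x^ky^l}y^k-2[F^2]_{x^l}=0$ on $U$. *)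

theory Defs
  imports "HOL-Analysis.Analysis"
begin

definition pdx :: "(real^'n \<Rightarrow> real^'n \<Rightarrow> real) \<Rightarrow> 'n \<Rightarrow> real^'n \<Rightarrow> real^'n \<Rightarrow> real" where
  "pdx G k x y = deriv (\<lambda>t. G (x + t *\<^sub>R axis k 1) y) 0"

definition pdxy :: "(real^'n \<Rightarrow> real^'n \<Rightarrow> real) \<Rightarrow> 'n \<Rightarrow> 'n \<Rightarrow> real^'n \<Rightarrow> real^'n \<Rightarrow> real" where
  "pdxy G k l x y = deriv (\<lambda>s. pdx G k x (y + s *\<^sub>R axis l 1)) 0"

definition dually_flat :: "(real^'n) set \<Rightarrow> (real^'n \<Rightarrow> real^'n \<Rightarrow> real) \<Rightarrow> bool" where
  "dually_flat U F \<longleftrightarrow>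
     (\<forall>x\<in>U. \<forall>y. y \<noteq> 0 \<longrightarrow>
        (\<forall>k. (\<lambda>t. (F (x + t *\<^sub>R axis k 1) y)\<^sup>2) differentiable (at 0)) \<and>
        (\<forall>k l. (\<lambda>s. pdx (\<lambda>x y. (F x y)\<^sup>2) k x (y + s *\<^sub>R axis l 1)) differentiable (at 0)) \<and>
        (\<forall>l. (\<Sum>k\<in>UNIV. pdxy (\<lambda>x y. (F x y)\<^sup>2) k l x y * y $ k)
               - 2 * pdx (\<lambda>x y. (F x y)\<^sup>2) l x y = 0))"

definition ball_mu :: "real \<Rightarrow> (real^'n) set" where
  "ball_mu \<mu> = (if \<mu> < 0 then ball 0 (1 / sqrt (- \<mu>)) else UNIV)"

definition randers_F :: "real \<Rightarrow> real \<Rightarrow> real^'n \<Rightarrow> real^'n \<Rightarrow> real" where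
  "randers_F \<mu> lam x y =
     root 4 (1 + (\<mu> + lam\<^sup>2) * (norm x)\<^sup>2)
       * sqrt ((1 + \<mu> * (norm x)\<^sup>2) * (norm y)\<^sup>2 - \<mu> * (x \<bullet> y)\<^sup>2)
       / (1 + \<mu> * (norm x)\<^sup>2)
     + lam * (x \<bullet> y) / ((1 + \<mu> * (norm x)\<^sup>2) * root 4 (1 + (\<mu> + lam\<^sup>2) * (norm x)\<^sup>2))"

end

theory Submission
  imports Defs
begin


definition pa :: "real\<Rightarrow>real\<Rightarrow>real\<Rightarrow>real\<Rightarrow>real\<Rightarrow>real\<Rightarrow>real\<Rightarrow>real" where
 "pa m L C r q b c = (r\<^sup>2*q+L*b)*((m+L\<^sup>2)*q/r\<^sup>2 + r\<^sup>2*m*c/q)/(C\<^sup>2*r\<^sup>2) - 2*m*(r\<^sup>2*q+L*b)\<^sup>2/(C^3*r\<^sup>2) - (m+L\<^sup>2)*(r\<^sup>2*q+L*b)\<^sup>2/(2*C\<^sup>2*r^6)"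
definition pb :: "real\<Rightarrow>real\<Rightarrow>real\<Rightarrow>real\<Rightarrow>real\<Rightarrow>real\<Rightarrow>real" where
 "pb m L C r q b = 2*(r\<^sup>2*q+L*b)*(L - r\<^sup>2*m*b/q)/(C\<^sup>2*r\<^sup>2)"
definition pab :: "real\<Rightarrow>real\<Rightarrow>real\<Rightarrow>real\<Rightarrow>real\<Rightarrow>real\<Rightarrow>real\<Rightarrow>real" where
 "pab m L C r q b c = L*((m+L\<^sup>2)*q/r\<^sup>2 + r\<^sup>2*m*c/q)/(C\<^sup>2*r\<^sup>2) - 4*m*(r\<^sup>2*q+L*b)*L/(C^3*r\<^sup>2) - (m+L\<^sup>2)*(r\<^sup>2*q+L*b)*L/(C\<^sup>2*r^6)"
definition pac :: "real\<Rightarrow>real\<Rightarrow>real\<Rightarrow>real\<Rightarrow>real\<Rightarrow>real\<Rightarrow>real" where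
 "pac m L C r q b = (r\<^sup>2*q+L*b)*m/(C\<^sup>2*q)"
definition paq :: "real\<Rightarrow>real\<Rightarrow>real\<Rightarrow>real\<Rightarrow>real\<Rightarrow>real\<Rightarrow>real\<Rightarrow>real" where
 "paq m L C r q b c = r\<^sup>2*((m+L\<^sup>2)*q/r\<^sup>2 + r\<^sup>2*m*c/q)/(C\<^sup>2*r\<^sup>2) + (r\<^sup>2*q+L*b)*((m+L\<^sup>2)/r\<^sup>2 - r\<^sup>2*m*c/q\<^sup>2)/(C\<^sup>2*r\<^sup>2) - 4*m*(r\<^sup>2*q+L*b)*r\<^sup>2/(C^3*r\<^sup>2) - (m+L\<^sup>2)*(r\<^sup>2*q+L*b)*r\<^sup>2/(C\<^sup>2*r^6)"
definition pbb :: "real\<Rightarrow>real\<Rightarrow>real\<Rightarrow>real\<Rightarrow>real\<Rightarrow>real\<Rightarrow>real" where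
 "pbb m L C r q b = 2*L*(L - r\<^sup>2*m*b/q)/(C\<^sup>2*r\<^sup>2) - 2*(r\<^sup>2*q+L*b)*(r\<^sup>2*m/q)/(C\<^sup>2*r\<^sup>2)"
definition pbq :: "real\<Rightarrow>real\<Rightarrow>real\<Rightarrow>real\<Rightarrow>real\<Rightarrow>real\<Rightarrow>real" where
 "pbq m L C r q b = 2*r\<^sup>2*(L - r\<^sup>2*m*b/q)/(C\<^sup>2*r\<^sup>2) + 2*(r\<^sup>2*q+L*b)*(r\<^sup>2*m*b/q\<^sup>2)/(C\<^sup>2*r\<^sup>2)"



lemma pa_chain:
  fixes \<beta> \<gamma> Q :: "real \<Rightarrow> real"
  assumes \<beta>: "(\<beta> has_real_derivative \<beta>') (at s)" and \<gamma>: "(\<gamma> has_real_derivative \<gamma>') (at s)"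
    and Q: "(Q has_real_derivative Q') (at s)"
    and nz: "Q s \<noteq> 0" "r \<noteq> 0" "C \<noteq> 0"
  shows "((\<lambda>s. pa m L C r (Q s) (\<beta> s) (\<gamma> s)) has_real_derivative
     (pab m L C r (Q s) (\<beta> s) (\<gamma> s) * \<beta>' + pac m L C r (Q s) (\<beta> s) * \<gamma>' + paq m L C r (Q s) (\<beta> s) (\<gamma> s) * Q')) (at s)"
  unfolding pa_def
  apply (rule derivative_eq_intros \<beta> \<gamma> Q refl | (use nz in simp; fail))+
  using nz unfolding pab_def pac_def paq_def
  apply (simp add: field_simps)
  apply algebra
  done

lemma pb_chain:
  fixes \<beta> Q :: "real \<Rightarrow> real"
  assumes \<beta>: "(\<beta> has_real_derivative \<beta>') (at s)"
    and Q: "(Q has_real_derivative Q') (at s)"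
    and nz: "Q s \<noteq> 0" "r \<noteq> 0" "C \<noteq> 0"
  shows "((\<lambda>s. pb m L C r (Q s) (\<beta> s)) has_real_derivative
     (pbb m L C r (Q s) (\<beta> s) * \<beta>' + pbq m L C r (Q s) (\<beta> s) * Q')) (at s)"
  unfolding pb_def
  apply (rule derivative_eq_intros \<beta> Q refl | (use nz in simp; fail))+
  using nz unfolding pbb_def pbq_def
  apply (simp add: field_simps)
  apply algebra
  done


lemma phi_chain:
  fixes \<alpha> \<beta> R Q Cc :: "real \<Rightarrow> real"
  assumes \<beta>: "(\<beta> has_real_derivative \<beta>') (at t)"
    and Cd: "(Cc has_real_derivative m*\<alpha>') (at t)"
    and R: "(R has_real_derivative (m+L\<^sup>2)*\<alpha>'/(4*R t^3)) (at t)"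
    and Q: "(Q has_real_derivative (m*\<alpha>'*c - 2*m*\<beta> t*\<beta>')/(2*Q t)) (at t)"
    and nz: "R t \<noteq> 0" "Q t \<noteq> 0" "Cc t \<noteq> 0"
  shows "((\<lambda>t. (R t * Q t/Cc t + L*\<beta> t/(Cc t*R t))\<^sup>2) has_real_derivative
     (pa m L (Cc t) (R t) (Q t) (\<beta> t) c * \<alpha>' + pb m L (Cc t) (R t) (Q t) (\<beta> t) * \<beta>')) (at t)"
  apply (rule derivative_eq_intros \<beta> Cd R Q refl | (use nz in simp; fail))+
  using nz unfolding pa_def pb_def
  apply (simp add: field_simps)
  apply algebra
  done

lemma Ev_id:
  fixes m L r q b C :: real
  assumes nz: "r \<noteq> 0" "C \<noteq> 0" "q \<noteq> 0"
  defines "c \<equiv> (q\<^sup>2 + m*b\<^sup>2)/C"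
  shows "2*b*(pac m L C r q b*2 + paq m L C r q b c*(C*2/(2*q))) + c*(pbq m L C r q b*(C*2/(2*q)))
     - pb m L C r q b = 2*b*((m+L\<^sup>2)*C - m*r^4 - L\<^sup>2)/(C\<^sup>2*r\<^sup>2)"
  using nz unfolding pb_def pac_def paq_def pbq_def c_def
  apply (simp add: field_simps)
  apply algebra
  done

lemma Eu_id:
  fixes m L r q b C :: real
  assumes nz: "r \<noteq> 0" "C \<noteq> 0" "q \<noteq> 0"
  defines "c \<equiv> (q\<^sup>2 + m*b\<^sup>2)/C"
  shows "2*b*(pab m L C r q b c + paq m L C r q b c*((- 2*m*b)/(2*q))) + c*(pbb m L C r q b + pbq m L C r q b*((- 2*m*b)/(2*q)))
     - 4*pa m L C r q b c = -2*c*((m+L\<^sup>2)*C - m*r^4 - L\<^sup>2)/(C\<^sup>2*r\<^sup>2)"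
  using nz unfolding pa_def pab_def pbb_def paq_def pbq_def c_def
  apply (simp add: field_simps)
  apply algebra
  done




lemma C_pos:
  fixes x :: "real^'n"
  assumes "x \<in> ball_mu m"
  shows "1 + m*(x \<bullet> x) > 0"
proof (cases "m < 0")
  case True
  then have "norm x < 1/sqrt(-m)" using assms by (simp add: ball_mu_def)
  then have "norm x * sqrt(-m) < 1" using True by (simp add: field_simps)
  then have "(norm x * sqrt(-m))\<^sup>2 < 1\<^sup>2"
    using True by (intro power_strict_mono) auto
  then have "(x \<bullet> x) * (-m) < 1" using True
    by (simp add: power_mult_distrib power2_norm_eq_inner)
  moreover have "m*(x \<bullet> x) = - ((x \<bullet> x) * (-m))" by simp
  ultimately show ?thesis by linarith
next
  case False
  then show ?thesis by (simp add: add_pos_nonneg)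
qed

lemma A_pos:
  fixes x y :: "real^'n"
  assumes C: "1 + m*(x \<bullet> x) > 0" and y: "y \<noteq> 0"
  shows "(1 + m*(x \<bullet> x))*(y \<bullet> y) - m*(x \<bullet> y)\<^sup>2 > 0"
proof -
  have cs: "(x \<bullet> y)\<^sup>2 \<le> (x \<bullet> x)*(y \<bullet> y)" by (rule Cauchy_Schwarz_ineq)
  have yy: "y \<bullet> y > 0" using y by simp
  show ?thesis
  proof (cases "m < 0")
    case True
    have "- m*(x \<bullet> y)\<^sup>2 \<ge> 0" using True by (simp add: mult_nonpos_nonneg)
    moreover have "(1 + m*(x \<bullet> x))*(y \<bullet> y) > 0" using C yy by simp
    ultimately show ?thesis by linarith
  next
    case False
    have h: "m*((x \<bullet> x)*(y \<bullet> y) - (x \<bullet> y)\<^sup>2) \<ge> 0" using False cs by simp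
    have e: "(1 + m*(x \<bullet> x))*(y \<bullet> y) - m*(x \<bullet> y)\<^sup>2 = y \<bullet> y + m*((x \<bullet> x)*(y \<bullet> y) - (x \<bullet> y)\<^sup>2)"
      by (simp add: algebra_simps)
    show ?thesis using e h yy by linarith
  qed
qed

lemma randers_eq:
  "randers_F m L x y = root 4 (1 + (m+L\<^sup>2)*(x \<bullet> x)) * sqrt((1 + m*(x \<bullet> x))*(y \<bullet> y) - m*(x \<bullet> y)\<^sup>2)/(1 + m*(x \<bullet> x))
     + L*(x \<bullet> y)/((1 + m*(x \<bullet> x))*root 4 (1 + (m+L\<^sup>2)*(x \<bullet> x)))"
  unfolding randers_F_def by (simp add: power2_norm_eq_inner)

lemma first_stage:
  fixes x y :: "real^'n"
  assumes C: "1 + m*(x \<bullet> x) > 0" and y: "y \<noteq> 0"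
  shows "((\<lambda>t. (randers_F m L (x + t *\<^sub>R axis k 1) y)\<^sup>2) has_real_derivative
      (pa m L (1 + m*(x \<bullet> x)) (root 4 (1 + (m+L\<^sup>2)*(x \<bullet> x))) (sqrt((1 + m*(x \<bullet> x))*(y \<bullet> y) - m*(x \<bullet> y)\<^sup>2)) (x \<bullet> y) (y \<bullet> y) * (2 * x$k)
      + pb m L (1 + m*(x \<bullet> x)) (root 4 (1 + (m+L\<^sup>2)*(x \<bullet> x))) (sqrt((1 + m*(x \<bullet> x))*(y \<bullet> y) - m*(x \<bullet> y)\<^sup>2)) (x \<bullet> y) * y$k)) (at 0)"
proof -
  define \<alpha> where "\<alpha> t = x \<bullet> x + 2*t*x$k + t\<^sup>2" for t :: real
  define \<beta> where "\<beta> t = x \<bullet> y + t*y$k" for t :: real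
  define Cc where "Cc t = 1 + m*\<alpha> t" for t
  define R where "R t = root 4 (1 + (m+L\<^sup>2)*\<alpha> t)" for t
  define Q where "Q t = sqrt(Cc t*(y \<bullet> y) - m*(\<beta> t)\<^sup>2)" for t
  have ia: "(x + t *\<^sub>R axis k 1) \<bullet> (x + t *\<^sub>R axis k 1) = \<alpha> t" for t
    by (simp add: \<alpha>_def inner_add_left inner_add_right inner_axis inner_axis' algebra_simps power2_eq_square)
  have ib: "(x + t *\<^sub>R axis k 1) \<bullet> y = \<beta> t" for t
    by (simp add: \<beta>_def inner_add_left inner_axis' algebra_simps)
  have feq: "(\<lambda>t. (randers_F m L (x + t *\<^sub>R axis k 1) y)\<^sup>2) = (\<lambda>t. (R t * Q t/Cc t + L*\<beta> t/(Cc t*R t))\<^sup>2)"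
    by (rule ext) (simp add: randers_eq ia ib R_def Q_def Cc_def mult.commute)
  have a0: "\<alpha> 0 = x \<bullet> x" "\<beta> 0 = x \<bullet> y" by (simp_all add: \<alpha>_def \<beta>_def)
  have Bpos: "1 + (m+L\<^sup>2)*(x \<bullet> x) > 0"
  proof -
    have "L\<^sup>2*(x \<bullet> x) \<ge> 0" by simp
    moreover have "1 + (m+L\<^sup>2)*(x \<bullet> x) = (1 + m*(x \<bullet> x)) + L\<^sup>2*(x \<bullet> x)" by (simp add: algebra_simps)
    ultimately show ?thesis using C by linarith
  qed
  have Apos: "Cc 0*(y \<bullet> y) - m*(\<beta> 0)\<^sup>2 > 0" using A_pos[OF C y] by (simp add: Cc_def a0)
  have R0: "R 0 > 0" using Bpos by (simp add: R_def a0)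
  have Q0: "Q 0 > 0" using Apos by (simp add: Q_def)
  have C0: "Cc 0 > 0" using C by (simp add: Cc_def a0)
  have da: "(\<alpha> has_real_derivative 2*x$k) (at 0)"
    unfolding \<alpha>_def by (rule derivative_eq_intros refl | simp)+
  have db: "(\<beta> has_real_derivative y$k) (at 0)"
    unfolding \<beta>_def by (rule derivative_eq_intros refl | simp)+
  have dC: "(Cc has_real_derivative m*(2*x$k)) (at 0)"
    unfolding Cc_def by (rule derivative_eq_intros da refl | simp)+
  have dR: "(R has_real_derivative (m+L\<^sup>2)*(2*x$k)/(4*R 0^3)) (at 0)"
    unfolding R_def
    apply (rule derivative_eq_intros da refl | (use Bpos a0 in simp; fail))+
    using Bpos by (simp add: a0 divide_simps)
  have dQ: "(Q has_real_derivative (m*(2*x$k)*(y \<bullet> y) - 2*m*\<beta> 0*y$k)/(2*Q 0)) (at 0)"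
    unfolding Q_def
    apply (rule derivative_eq_intros dC db refl | (use Apos in simp; fail))+
    using Apos by (simp add: divide_simps)
  have "((\<lambda>t. (R t * Q t/Cc t + L*\<beta> t/(Cc t*R t))\<^sup>2) has_real_derivative
     (pa m L (Cc 0) (R 0) (Q 0) (\<beta> 0) (y \<bullet> y) * (2*x$k) + pb m L (Cc 0) (R 0) (Q 0) (\<beta> 0) * y$k)) (at 0)"
    by (rule phi_chain[OF db dC dR dQ]) (use R0 Q0 C0 in auto)
  then show ?thesis unfolding feq by (simp add: Cc_def R_def Q_def a0)
qed


lemma B_pos:
  fixes x :: "real^'n"
  assumes C: "1 + m*(x \<bullet> x) > 0"
  shows "1 + (m+L\<^sup>2)*(x \<bullet> x) > 0"
proof -
  have "L\<^sup>2*(x \<bullet> x) \<ge> 0" by simp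
  moreover have "1 + (m+L\<^sup>2)*(x \<bullet> x) = (1 + m*(x \<bullet> x)) + L\<^sup>2*(x \<bullet> x)" by (simp add: algebra_simps)
  ultimately show ?thesis using C by linarith
qed

lemma pdx_val:
  fixes x y :: "real^'n"
  assumes C: "1 + m*(x \<bullet> x) > 0" and y: "y \<noteq> 0"
  shows "pdx (\<lambda>x y. (randers_F m L x y)\<^sup>2) k x y =
      pa m L (1 + m*(x \<bullet> x)) (root 4 (1 + (m+L\<^sup>2)*(x \<bullet> x))) (sqrt((1 + m*(x \<bullet> x))*(y \<bullet> y) - m*(x \<bullet> y)\<^sup>2)) (x \<bullet> y) (y \<bullet> y) * (2 * x$k)
      + pb m L (1 + m*(x \<bullet> x)) (root 4 (1 + (m+L\<^sup>2)*(x \<bullet> x))) (sqrt((1 + m*(x \<bullet> x))*(y \<bullet> y) - m*(x \<bullet> y)\<^sup>2)) (x \<bullet> y) * y$k"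
  unfolding pdx_def by (rule DERIV_imp_deriv[OF first_stage[OF C y]])

lemma ev_nz:
  fixes y :: "real^'n"
  assumes y: "y \<noteq> 0"
  shows "\<forall>\<^sub>F s in nhds 0. y + s *\<^sub>R axis l 1 \<noteq> 0"
  unfolding eventually_nhds_metric
proof (intro exI[of _ "norm y"] conjI allI impI)
  show "norm y > 0" using y by simp
next
  fix s :: real assume "dist s 0 < norm y"
  then have s: "\<bar>s\<bar> < norm y" by simp
  show "y + s *\<^sub>R axis l 1 \<noteq> 0"
  proof
    assume "y + s *\<^sub>R axis l 1 = 0"
    then have "y = - (s *\<^sub>R axis l 1)" by (simp add: eq_neg_iff_add_eq_0)
    then have "norm y = \<bar>s\<bar>" by simp
    then show False using s by simp
  qed
qed

lemma second_stage:
  fixes x y :: "real^'n" and m L :: real and k l :: 'n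
  assumes C: "1 + m*(x \<bullet> x) > 0" and y: "y \<noteq> 0"
  defines "CC \<equiv> 1 + m*(x \<bullet> x)"
  defines "r \<equiv> root 4 (1 + (m+L\<^sup>2)*(x \<bullet> x))"
  defines "q \<equiv> sqrt(CC*(y \<bullet> y) - m*(x \<bullet> y)\<^sup>2)"
  defines "b \<equiv> x \<bullet> y" and "c \<equiv> y \<bullet> y"
  defines "Q' \<equiv> (CC*(2*y$l) - 2*m*b*x$l)/(2*q)"
  shows "((\<lambda>s. pdx (\<lambda>x y. (randers_F m L x y)\<^sup>2) k x (y + s *\<^sub>R axis l 1)) has_real_derivative
     ((pab m L CC r q b c * x$l + pac m L CC r q b * (2*y$l) + paq m L CC r q b c * Q')*(2*x$k)
      + (pbb m L CC r q b * x$l + pbq m L CC r q b * Q') * y$k + pb m L CC r q b * (axis l 1 $ k))) (at 0)"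
proof -
  define \<beta> where "\<beta> s = x \<bullet> y + s*x$l" for s :: real
  define \<gamma> where "\<gamma> s = y \<bullet> y + 2 * s * y$l + s\<^sup>2" for s :: real
  define Q where "Q s = sqrt(CC*\<gamma> s - m*(\<beta> s)\<^sup>2)" for s
  define \<delta> :: real where "\<delta> = axis l 1 $ k"
  define h where "h s = pa m L CC r (Q s) (\<beta> s) (\<gamma> s) * (2*x$k) + pb m L CC r (Q s) (\<beta> s) * (y$k + s*\<delta>)" for s
  have ev: "\<forall>\<^sub>F s in nhds 0. pdx (\<lambda>x y. (randers_F m L x y)\<^sup>2) k x (y + s *\<^sub>R axis l 1) = h s"
    using ev_nz[OF y, of l]
  proof (rule eventually_mono)
    fix s :: real assume nz: "y + s *\<^sub>R axis l 1 \<noteq> 0"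
    have i1: "x \<bullet> (y + s *\<^sub>R axis l 1) = \<beta> s"
      by (simp add: \<beta>_def inner_add_right inner_axis algebra_simps)
    have i2: "(y + s *\<^sub>R axis l 1) \<bullet> (y + s *\<^sub>R axis l 1) = \<gamma> s"
      by (simp add: \<gamma>_def inner_add_left inner_add_right inner_axis inner_axis' algebra_simps power2_eq_square)
    have i3: "(y + s *\<^sub>R axis l 1) $ k = y$k + s*\<delta>" by (simp add: \<delta>_def)
    show "pdx (\<lambda>x y. (randers_F m L x y)\<^sup>2) k x (y + s *\<^sub>R axis l 1) = h s"
      unfolding pdx_val[OF C nz] i1 i2 i3 h_def Q_def CC_def r_def ..
  qed
  have A0: "CC*\<gamma> 0 - m*(\<beta> 0)\<^sup>2 > 0" using A_pos[OF C y] by (simp add: CC_def \<gamma>_def \<beta>_def)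
  have Q0: "Q 0 = q" by (simp add: Q_def q_def \<gamma>_def \<beta>_def)
  have qpos: "q > 0" using A0 Q0 Q_def by auto
  have rpos: "r > 0" using B_pos[OF C] by (simp add: r_def)
  have CCpos: "CC > 0" using C by (simp add: CC_def)
  have db: "(\<beta> has_real_derivative x$l) (at 0)"
    unfolding \<beta>_def by (rule derivative_eq_intros refl | simp)+
  have dg: "(\<gamma> has_real_derivative 2*y$l) (at 0)"
    unfolding \<gamma>_def by (rule derivative_eq_intros refl | simp)+
  have dQ: "(Q has_real_derivative Q') (at 0)"
    unfolding Q_def
    apply (rule derivative_eq_intros dg db refl | (use A0 in simp; fail))+
    using A0 qpos unfolding Q'_def q_def b_def by (simp add: \<gamma>_def \<beta>_def divide_simps)
  have b0: "\<beta> 0 = b" "\<gamma> 0 = c" by (simp_all add: \<beta>_def \<gamma>_def b_def c_def)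
  have dpa: "((\<lambda>s. pa m L CC r (Q s) (\<beta> s) (\<gamma> s)) has_real_derivative
     (pab m L CC r q b c * x$l + pac m L CC r q b * (2*y$l) + paq m L CC r q b c * Q')) (at 0)"
    using pa_chain[OF db dg dQ] qpos rpos CCpos by (simp add: Q0 b0)
  have dpb: "((\<lambda>s. pb m L CC r (Q s) (\<beta> s)) has_real_derivative
     (pbb m L CC r q b * x$l + pbq m L CC r q b * Q')) (at 0)"
    using pb_chain[OF db dQ] qpos rpos CCpos by (simp add: Q0 b0)
  have "(h has_real_derivative
     ((pab m L CC r q b c * x$l + pac m L CC r q b * (2*y$l) + paq m L CC r q b c * Q')*(2*x$k)
      + (pbb m L CC r q b * x$l + pbq m L CC r q b * Q') * y$k + pb m L CC r q b * (axis l 1 $ k))) (at 0)"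
    unfolding h_def
    apply (rule derivative_eq_intros dpa dpb refl)+
    by (simp add: Q0 b0 \<delta>_def)
  then show ?thesis
    by (subst DERIV_cong_ev[OF refl ev refl])
qed


lemma DERIV_differentiable_real:
  fixes f :: "real \<Rightarrow> real"
  shows "(f has_real_derivative D) (at x) \<Longrightarrow> f differentiable (at x)"
  by (metis DERIV_deriv_iff_real_differentiable DERIV_imp_deriv)

lemma final_combine:
  fixes m L CC r q b c uu vv :: real
  assumes nz: "r \<noteq> 0" "CC \<noteq> 0" "q \<noteq> 0" and hc: "c = (q\<^sup>2 + m*b\<^sup>2)/CC"
    and rel: "(m+L\<^sup>2)*CC - m*r^4 - L\<^sup>2 = 0"
  defines "Q' \<equiv> (CC*(2* vv) - 2*m*b* uu)/(2*q)"
  shows "2*(pab m L CC r q b c * uu + pac m L CC r q b * (2* vv) + paq m L CC r q b c * Q')*b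
     + (pbb m L CC r q b * uu + pbq m L CC r q b * Q')*c + pb m L CC r q b * vv
     - 2*(pa m L CC r q b c * (2* uu) + pb m L CC r q b * vv) = 0"
proof -
  have Eu: "2*b*(pab m L CC r q b c + paq m L CC r q b c*((- 2*m*b)/(2*q))) + c*(pbb m L CC r q b + pbq m L CC r q b*((- 2*m*b)/(2*q)))
     - 4*pa m L CC r q b c = 0"
    using Eu_id[where m=m and L=L and r=r and q=q and b=b and C=CC, OF nz, folded hc] rel by simp
  have Ev: "2*b*(pac m L CC r q b*2 + paq m L CC r q b c*(CC*2/(2*q))) + c*(pbq m L CC r q b*(CC*2/(2*q)))
     - pb m L CC r q b = 0"
    using Ev_id[where m=m and L=L and r=r and q=q and b=b and C=CC, OF nz, folded hc] rel by simp
  have "2*(pab m L CC r q b c * uu + pac m L CC r q b * (2* vv) + paq m L CC r q b c * Q')*b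
     + (pbb m L CC r q b * uu + pbq m L CC r q b * Q')*c + pb m L CC r q b * vv
     - 2*(pa m L CC r q b c * (2* uu) + pb m L CC r q b * vv)
     = uu*(2*b*(pab m L CC r q b c + paq m L CC r q b c*((- 2*m*b)/(2*q))) + c*(pbb m L CC r q b + pbq m L CC r q b*((- 2*m*b)/(2*q)))
     - 4*pa m L CC r q b c) + vv*(2*b*(pac m L CC r q b*2 + paq m L CC r q b c*(CC*2/(2*q))) + c*(pbq m L CC r q b*(CC*2/(2*q)))
     - pb m L CC r q b)"
    unfolding Q'_def using nz by (simp add: field_simps)
  then show ?thesis using Eu Ev by simp
qed

theorem theorem1p3:
  fixes \<mu> lam :: real
  shows "dually_flat (ball_mu \<mu> :: (real^'n) set) (randers_F \<mu> lam)"
  unfolding dually_flat_def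
proof (intro ballI allI impI conjI)
  fix x y :: "real^'n"
  assume xb: "x \<in> ball_mu \<mu>" and y: "y \<noteq> 0"
  have C: "1 + \<mu>*(x \<bullet> x) > 0" using C_pos[OF xb] .
  show "(\<lambda>t. (randers_F \<mu> lam (x + t *\<^sub>R axis k 1) y)\<^sup>2) differentiable (at 0)" for k
    by (rule DERIV_differentiable_real[OF first_stage[OF C y]])
  show "(\<lambda>s. pdx (\<lambda>x y. (randers_F \<mu> lam x y)\<^sup>2) k x (y + s *\<^sub>R axis l 1)) differentiable (at 0)" for k l
    by (rule DERIV_differentiable_real[OF second_stage[OF C y]])
  fix l
  define CC where "CC = 1 + \<mu>*(x \<bullet> x)"
  define r where "r = root 4 (1 + (\<mu>+lam\<^sup>2)*(x \<bullet> x))"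
  define q where "q = sqrt(CC*(y \<bullet> y) - \<mu>*(x \<bullet> y)\<^sup>2)"
  define b where "b = x \<bullet> y"
  define c where "c = y \<bullet> y"
  define Q' where "Q' = (CC*(2*y$l) - 2*\<mu>*b*x$l)/(2*q)"
  define D1 where "D1 = pab \<mu> lam CC r q b c * x$l + pac \<mu> lam CC r q b * (2*y$l) + paq \<mu> lam CC r q b c * Q'"
  define D2 where "D2 = pbb \<mu> lam CC r q b * x$l + pbq \<mu> lam CC r q b * Q'"
  define P0 where "P0 = pb \<mu> lam CC r q b"
  have pxy: "pdxy (\<lambda>x y. (randers_F \<mu> lam x y)\<^sup>2) k l x y = D1*(2*x$k) + D2*y$k + P0*(axis l 1 $ k)" for k
    unfolding pdxy_def
    using DERIV_imp_deriv[OF second_stage[OF C y, of lam k l]]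
    by (simp add: D1_def D2_def P0_def Q'_def CC_def r_def q_def b_def c_def)
  have px: "pdx (\<lambda>x y. (randers_F \<mu> lam x y)\<^sup>2) l x y = pa \<mu> lam CC r q b c * (2*x$l) + P0*y$l"
    using pdx_val[OF C y, of lam l] by (simp add: CC_def r_def q_def b_def c_def P0_def)
  have s1: "(\<Sum>k\<in>UNIV. x$k*y$k) = b" by (simp add: b_def inner_vec_def)
  have s2: "(\<Sum>k\<in>UNIV. y$k*y$k) = c" by (simp add: c_def inner_vec_def)
  have s3: "(\<Sum>k\<in>UNIV. (axis l 1 $ k)*y$k) = y$l" by (simp add: axis_def if_distrib[of "\<lambda>z. z * _"] cong: if_cong)
  have "(\<Sum>k\<in>UNIV. pdxy (\<lambda>x y. (randers_F \<mu> lam x y)\<^sup>2) k l x y * y $ k)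
      = (\<Sum>k\<in>UNIV. (2*D1)*(x$k*y$k) + D2*(y$k*y$k) + P0*((axis l 1 $ k)*y$k))"
    by (rule sum.cong) (simp_all add: pxy algebra_simps)
  also have "\<dots> = (2*D1)*b + D2*c + P0*y$l"
    by (simp add: sum.distrib sum_distrib_left[symmetric] s1 s2 s3)
  finally have sum: "(\<Sum>k\<in>UNIV. pdxy (\<lambda>x y. (randers_F \<mu> lam x y)\<^sup>2) k l x y * y $ k) = (2*D1)*b + D2*c + P0*y$l" .
  have Bp: "1 + (\<mu>+lam\<^sup>2)*(x \<bullet> x) > 0" by (rule B_pos[OF C])
  have rpos: "r > 0" using Bp by (simp add: r_def)
  have r4: "r^4 = 1 + (\<mu>+lam\<^sup>2)*(x \<bullet> x)" using Bp by (simp add: r_def)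
  have A: "CC*(y \<bullet> y) - \<mu>*(x \<bullet> y)\<^sup>2 > 0" using A_pos[OF C y] by (simp add: CC_def)
  have qpos: "q > 0" using A by (simp add: q_def)
  have q2: "q\<^sup>2 = CC*c - \<mu>*b\<^sup>2" using A by (simp add: q_def c_def b_def)
  have CCpos: "CC > 0" using C by (simp add: CC_def)
  have hc: "c = (q\<^sup>2 + \<mu>*b\<^sup>2)/CC" using q2 CCpos by (simp add: field_simps)
  have rel: "(\<mu>+lam\<^sup>2)*CC - \<mu>*r^4 - lam\<^sup>2 = 0" by (simp add: r4 CC_def algebra_simps)
  show "(\<Sum>k\<in>UNIV. pdxy (\<lambda>x y. (randers_F \<mu> lam x y)\<^sup>2) k l x y * y $ k) - 2 * pdx (\<lambda>x y. (randers_F \<mu> lam x y)\<^sup>2) l x y = 0"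
    unfolding sum px using final_combine[OF _ _ _ hc rel, of "x$l" "y$l"] rpos qpos CCpos
    by (simp add: D1_def D2_def P0_def Q'_def)
qed

end
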